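(* For the modular data of the quantum double of $S_3$, the modular invariants $Z_{(21)},Z_{(61)},Z_{(3)},Z_{(4)},Z_{(1)},Z_{(12)},Z_{(2)},Z_{(16)}$ are nimless.
   Context: Primaries $0,\dots,7$, all self-conjugate, with $S=\frac16\begin{pmatrix}1&1&2&2&2&2&3&3\\1&1&2&2&2&2&-3&-3\\2&2&4&-2&-2&-2&0&0\\2&2&-2&4&-2&-2&0&0\\2&2&-2&-2&-2&4&0&0\\2&2&-2&-2&4&-2&0&0\\3&-3&0&0&0&0&3&-3\\3&-3&0&0&0&0&-3&3\end{pmatrix}$, $T=\mathrm{diag}(1,1,1,1,e^{2\pi i/3},e^{4\pi i/3},1,-1)$, fusion coefficients $N_{\lambda\mu}^\nu=\sum_\rho S_{\lambda\rho}S_{\mu\rho}\overline{S_{\nu\rho}}/S_{0\rho}$. Matrices are written as $\sum Z_{\lambda\mu}\chi_\lambda\chi_\mu^*$ (products of linear forms $st^*$ meaning the matrix of products of coefficients). $Z_{(1)}=|\chi_0+\chi_1+\chi_3|^2+\chi_2\chi_3^*+\chi_3\chi_2^*+|\chi_3|^2+|\chi_4|^2+|\chi_5|^2$; $Z_{(2)}=|\chi_0+\chi_1+\chi_3|^2+|\chi_2|^2+2|\chi_3|^2+|\chi_4|^2+|\chi_5|^2$; $Z_{(3)}=|\chi_0+\chi_1+\chi_2|^2+|\chi_2|^2+\chi_2\chi_3^*+\chi_3\chi_2^*+|\chi_4|^2+|\chi_5|^2$; $Z_{(4)}=|\chi_0+\chi_1+\chi_2|^2+2|\chi_2|^2+|\chi_3|^2+|\chi_4|^2+|\chi_5|^2$;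 $Z_{(21)}=(\chi_0+\chi_1+\chi_3)(\chi_0+\chi_1+\chi_2)^*+2\chi_3\chi_2^*+\chi_2\chi_3^*+|\chi_4|^2+|\chi_5|^2$, $Z_{(12)}=Z_{(21)}^t$; $Z_{(61)}=(\chi_0+\chi_1+\chi_3)(\chi_0+\chi_1+\chi_2)^*+\chi_3\chi_2^*+\chi_2\chi_2^*+|\chi_3|^2+|\chi_4|^2+|\chi_5|^2$, $Z_{(16)}=Z_{(61)}^t$. A nimrep of dimension $n$: non-negative integer $n\times n$ matrices $G_\lambda$ with $G_0=I$, $G_{\bar\lambda}=G_\lambda^t$, $G_\lambda G_\mu=\sum_\nu N_{\lambda\mu}^\nu G_\nu$. $\mathrm{Exp}(Z)$ is the multiset with $Z_{\mu\mu}$ copies of $\mu$. A nimrep matches $Z$ if $n=\mathrm{Tr}\,Z$ and the $G_\lambda$ are simultaneously unitarily diagonalisable with joint eigenvalues $(S_{\lambda\mu}/S_{0\mu})_\lambda$, $\mu$ running through $\mathrm{Exp}(Z)$ with multiplicity. $Z$ is nimless if no matching nimrep exists. *)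

theory Defs
  imports Complex_Main
begin

text \<open>Modular data of the quantum double of S3, primaries 0..7 (all self-conjugate).
  The S-matrix is real, so complex conjugation of its entries is the identity.\<close>

definition S6 :: "int list list" where
  "S6 = [[1,1,2,2,2,2,3,3],
         [1,1,2,2,2,2,-3,-3],
         [2,2,4,-2,-2,-2,0,0],
         [2,2,-2,4,-2,-2,0,0],
         [2,2,-2,-2,-2,4,0,0],
         [2,2,-2,-2,4,-2,0,0],
         [3,-3,0,0,0,0,3,-3],
         [3,-3,0,0,0,0,-3,3]]"

definition Smat :: "nat \<Rightarrow> nat \<Rightarrow> real" where
  "Smat l m = real_of_int ((S6 ! l) ! m) / 6"

definition conjp :: "nat \<Rightarrow> nat" where
  "conjp l = l"

text \<open>Verlinde formula (S real, so conj S = S).\<close>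
definition fusionN :: "nat \<Rightarrow> nat \<Rightarrow> nat \<Rightarrow> real" where
  "fusionN l m v = (\<Sum>r<8. Smat l r * Smat m r * Smat v r / Smat 0 r)"

definition is_nimrep :: "nat \<Rightarrow> (nat \<Rightarrow> nat \<Rightarrow> nat \<Rightarrow> nat) \<Rightarrow> bool" where
  "is_nimrep n G \<longleftrightarrow>
     (\<forall>i<n. \<forall>j<n. G 0 i j = (if i = j then 1 else 0)) \<and>
     (\<forall>l<8. \<forall>i<n. \<forall>j<n. G (conjp l) i j = G l j i) \<and>
     (\<forall>l<8. \<forall>m<8. \<forall>i<n. \<forall>j<n.
        real (\<Sum>k<n. G l i k * G m k j) = (\<Sum>v<8. fusionN l m v * real (G v i j)))"

text \<open>Exp(Z) enumerated with multiplicity as a list mu (mu ! j = primary of j-th eigenvector).\<close>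
definition matches :: "(nat \<Rightarrow> nat \<Rightarrow> nat) \<Rightarrow> nat \<Rightarrow> (nat \<Rightarrow> nat \<Rightarrow> nat \<Rightarrow> nat) \<Rightarrow> bool" where
  "matches Z n G \<longleftrightarrow>
     n = (\<Sum>v<8. Z v v) \<and>
     (\<exists>mu :: nat list. \<exists>U :: nat \<Rightarrow> nat \<Rightarrow> complex.
        length mu = n \<and> (\<forall>v<8. count_list mu v = Z v v) \<and> set mu \<subseteq> {..<8} \<and>
        (\<forall>i<n. \<forall>j<n. (\<Sum>k<n. cnj (U k i) * U k j) = (if i = j then 1 else 0)) \<and>
        (\<forall>l<8. \<forall>i<n. \<forall>j<n.
           (\<Sum>k<n. of_nat (G l i k) * U k j)
             = U i j * complex_of_real (Smat l (mu ! j) / Smat 0 (mu ! j))))"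

definition nimless :: "(nat \<Rightarrow> nat \<Rightarrow> nat) \<Rightarrow> bool" where
  "nimless Z \<longleftrightarrow> \<not> (\<exists>n G. is_nimrep n G \<and> matches Z n G)"

definition ind :: "nat set \<Rightarrow> nat \<Rightarrow> nat" where
  "ind A x = (if x \<in> A then 1 else 0)"

definition Eu :: "nat \<Rightarrow> nat \<Rightarrow> nat \<Rightarrow> nat \<Rightarrow> nat" where
  "Eu a b x y = (if x = a \<and> y = b then 1 else 0)"

definition la :: "nat \<Rightarrow> nat" where "la = ind {0,1,3}"   (* chi0+chi1+chi3 *)
definition lb :: "nat \<Rightarrow> nat" where "lb = ind {0,1,2}"   (* chi0+chi1+chi2 *)

definition Z1 :: "nat \<Rightarrow> nat \<Rightarrow> nat" where
  "Z1 x y = la x * la y + Eu 2 3 x y + Eu 3 2 x y + Eu 3 3 x y + Eu 4 4 x y + Eu 5 5 x y"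
definition Z2 :: "nat \<Rightarrow> nat \<Rightarrow> nat" where
  "Z2 x y = la x * la y + Eu 2 2 x y + 2 * Eu 3 3 x y + Eu 4 4 x y + Eu 5 5 x y"
definition Z3 :: "nat \<Rightarrow> nat \<Rightarrow> nat" where
  "Z3 x y = lb x * lb y + Eu 2 2 x y + Eu 2 3 x y + Eu 3 2 x y + Eu 4 4 x y + Eu 5 5 x y"
definition Z4 :: "nat \<Rightarrow> nat \<Rightarrow> nat" where
  "Z4 x y = lb x * lb y + 2 * Eu 2 2 x y + Eu 3 3 x y + Eu 4 4 x y + Eu 5 5 x y"
definition Z21 :: "nat \<Rightarrow> nat \<Rightarrow> nat" where
  "Z21 x y = la x * lb y + 2 * Eu 3 2 x y + Eu 2 3 x y + Eu 4 4 x y + Eu 5 5 x y"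
definition Z12 :: "nat \<Rightarrow> nat \<Rightarrow> nat" where
  "Z12 x y = Z21 y x"
definition Z61 :: "nat \<Rightarrow> nat \<Rightarrow> nat" where
  "Z61 x y = la x * lb y + Eu 3 2 x y + Eu 2 2 x y + Eu 3 3 x y + Eu 4 4 x y + Eu 5 5 x y"
definition Z16 :: "nat \<Rightarrow> nat \<Rightarrow> nat" where
  "Z16 x y = Z61 y x"

end

theory Submission
  imports Defs "Jordan_Normal_Form.Determinant"
begin


lemma sum8: "(\<Sum>l<(8::nat). f l) = f 0 + f 1 + f 2 + f 3 + f 4 + f 5 + f 6 + f 7"
  by (simp add: eval_nat_numeral add.commute add.left_commute)

definition psi :: "nat \<Rightarrow> nat \<Rightarrow> real" where "psi l m = Smat l m / Smat 0 m"

lemma lt8: "(m::nat) < 8 \<longleftrightarrow> m = 0 \<or> m = 1 \<or> m = 2 \<or> m = 3 \<or> m = 4 \<or> m = 5 \<or> m = 6 \<or> m = 7"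
  by auto

lemma orthS:
  assumes "m < 8" "m' < 8"
  shows "(\<Sum>l<8. Smat 0 m * Smat l m * psi l m') = (if m = m' then 1 else 0)"
  using assms unfolding lt8 sum8
  by (auto simp: psi_def Smat_def S6_def)

lemma unitary_right:
  fixes U :: "nat \<Rightarrow> nat \<Rightarrow> complex"
  assumes orth: "\<forall>i<n. \<forall>j<n. (\<Sum>k<n. cnj (U k i) * U k j) = (if i = j then 1 else 0)"
  shows "\<forall>i<n. \<forall>j<n. (\<Sum>k<n. U i k * cnj (U j k)) = (if i = j then 1 else 0)"
proof (intro allI impI)
  fix i j assume ij: "i < n" "j < n"
  define A where "A = mat n n (\<lambda>(i,j). cnj (U j i))"
  define B where "B = mat n n (\<lambda>(i,j). U i j)"
  have AB: "A * B = 1\<^sub>m n"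
    by (rule eq_matI) (use orth in \<open>auto simp: A_def B_def scalar_prod_def row_def col_def lessThan_atLeast0\<close>)
  have BA: "B * A = 1\<^sub>m n"
    by (rule mat_mult_left_right_inverse[OF _ _ AB]) (auto simp: A_def B_def)
  have "(B * A) $$ (i,j) = (\<Sum>k<n. U i k * cnj (U j k))"
    using ij by (simp add: A_def B_def scalar_prod_def row_def col_def lessThan_atLeast0)
  then show "(\<Sum>k<n. U i k * cnj (U j k)) = (if i = j then 1 else 0)"
    using BA ij by simp
qed

locale nimsetup =
  fixes n :: nat and G :: "nat \<Rightarrow> nat \<Rightarrow> nat \<Rightarrow> nat" and mu :: "nat list"
    and U :: "nat \<Rightarrow> nat \<Rightarrow> complex"
  assumes nim: "is_nimrep n G"
    and len: "length mu = n" and setmu: "set mu \<subseteq> {..<8}"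
    and orth: "\<forall>i<n. \<forall>j<n. (\<Sum>k<n. cnj (U k i) * U k j) = (if i = j then 1 else 0)"
    and eig: "\<forall>l<8. \<forall>i<n. \<forall>j<n. (\<Sum>k<n. of_nat (G l i k) * U k j)
             = U i j * complex_of_real (Smat l (mu ! j) / Smat 0 (mu ! j))"
begin

lemma orth2: "i < n \<Longrightarrow> j < n \<Longrightarrow> (\<Sum>k<n. U i k * cnj (U j k)) = (if i = j then 1 else 0)"
  using unitary_right[OF orth] by blast

lemma mu_lt: "k < n \<Longrightarrow> mu ! k < 8"
  using setmu len nth_mem by fastforce

lemma F2:
  assumes "l < 8" "i < n" "j < n"
  shows "of_nat (G l i j) = (\<Sum>k<n. U i k * of_real (psi l (mu!k)) * cnj (U j k))"
proof -
  have "(\<Sum>k<n. U i k * of_real (psi l (mu!k)) * cnj (U j k))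
      = (\<Sum>k<n. (\<Sum>p<n. of_nat (G l i p) * U p k) * cnj (U j k))"
    using eig assms by (intro sum.cong) (auto simp: psi_def)
  also have "\<dots> = (\<Sum>p<n. of_nat (G l i p) * (\<Sum>k<n. U p k * cnj (U j k)))"
    by (simp add: sum_distrib_left sum_distrib_right mult.assoc) (rule sum.swap)
  also have "\<dots> = (\<Sum>p<n. of_nat (G l i p) * (if p = j then 1 else 0))"
    using orth2 assms by (intro sum.cong) auto
  also have "\<dots> = of_nat (G l i j)" using assms by (simp add: if_distrib cong: if_cong)
  finally show ?thesis ..
qed

lemma F3:
  assumes "m < 8" "i < n" "j < n"
  shows "(\<Sum>k<n. if mu!k = m then U i k * cnj (U j k) else 0)
       = of_real (\<Sum>l<8. Smat 0 m * Smat l m * real (G l i j))"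
proof -
  have "of_real (\<Sum>l<8. Smat 0 m * Smat l m * real (G l i j))
      = (\<Sum>l<8. of_real (Smat 0 m * Smat l m) * (of_nat (G l i j) :: complex))" by simp
  also have "\<dots> = (\<Sum>l<8. of_real (Smat 0 m * Smat l m) *
                    (\<Sum>k<n. U i k * of_real (psi l (mu!k)) * cnj (U j k)))"
    using F2 assms by (intro sum.cong) auto
  also have "\<dots> = (\<Sum>k<n. U i k * cnj (U j k) * of_real (\<Sum>l<8. Smat 0 m * Smat l m * psi l (mu!k)))"
  proof -
    have "(\<Sum>l<8. of_real (Smat 0 m * Smat l m) *
                    (\<Sum>k<n. U i k * of_real (psi l (mu!k)) * cnj (U j k)))
        = (\<Sum>l<8. \<Sum>k<n. U i k * cnj (U j k) * of_real (Smat 0 m * Smat l m * psi l (mu!k)))"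
      by (simp add: sum_distrib_left mult_ac)
    also have "\<dots> = (\<Sum>k<n. \<Sum>l<8. U i k * cnj (U j k) * of_real (Smat 0 m * Smat l m * psi l (mu!k)))"
      by (rule sum.swap)
    also have "\<dots> = (\<Sum>k<n. U i k * cnj (U j k) * of_real (\<Sum>l<8. Smat 0 m * Smat l m * psi l (mu!k)))"
      by (simp add: sum_distrib_left)
    finally show ?thesis .
  qed
  also have "\<dots> = (\<Sum>k<n. if mu!k = m then U i k * cnj (U j k) else 0)"
    using orthS assms mu_lt by (intro sum.cong) auto
  finally show ?thesis ..
qed

end


lemma sq_ne_2: "(k::int)^2 \<noteq> 2"
proof
  assume h: "k^2 = 2"
  have "\<bar>k\<bar> \<le> 1 \<or> \<bar>k\<bar> \<ge> 2" by linarith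
  then show False
  proof
    assume "\<bar>k\<bar> \<le> 1"
    then have "k = -1 \<or> k = 0 \<or> k = 1" by linarith
    then show False using h by auto
  next
    assume a: "\<bar>k\<bar> \<ge> 2"
    have "\<bar>k\<bar> * \<bar>k\<bar> \<ge> 2 * 2" using a by (intro mult_mono) auto
    then show False using h by (simp add: power2_eq_square abs_mult[symmetric])
  qed
qed

lemma even_side:
  fixes K :: "nat \<Rightarrow> nat \<Rightarrow> int"
  assumes fin: "finite S"
    and gram: "\<forall>i\<in>S. \<forall>j\<in>S. (K i j)^2 = K i i * K j j"
    and zs: "\<forall>j\<in>S. (\<Sum>i\<in>S. K i j) = 0"
  shows "even (\<Sum>i\<in>S. K i i)"
proof -
  define C where "C = (\<Sum>i\<in>S. K i i)"
  have ej: "even (C * K j j)" if j: "j \<in> S" for j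
  proof -
    have "C * K j j = (\<Sum>i\<in>S. K i i * K j j)" by (simp add: C_def sum_distrib_right)
    also have "\<dots> = (\<Sum>i\<in>S. (K i j)^2)" using gram j by (intro sum.cong) auto
    also have "\<dots> = (\<Sum>i\<in>S. K i j) + (\<Sum>i\<in>S. K i j * (K i j - 1))"
      by (simp add: sum.distrib[symmetric] power2_eq_square algebra_simps)
    also have "\<dots> = (\<Sum>i\<in>S. K i j * (K i j - 1))" using zs j by simp
    finally have eq: "C * K j j = (\<Sum>i\<in>S. K i j * (K i j - 1))" .
    have "even (\<Sum>i\<in>S. K i j * (K i j - 1))"
      by (intro dvd_sum) auto
    then show ?thesis using eq by simp
  qed
  have "C * C = (\<Sum>j\<in>S. C * K j j)" by (simp add: C_def sum_distrib_left)
  moreover have "even (\<Sum>j\<in>S. C * K j j)" using ej by (intro dvd_sum) auto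
  ultimately have "even (C * C)" by simp
  then show ?thesis by (simp add: C_def)
qed

lemma parity:
  fixes K :: "nat \<Rightarrow> nat \<Rightarrow> int"
  assumes "finite P" "finite M" "P \<inter> M = {}"
    and gram: "\<forall>i\<in>P\<union>M. \<forall>j\<in>P\<union>M. (K i j)^2 = K i i * K j j"
    and zP: "\<forall>j\<in>P. (\<Sum>i\<in>P. K i j) = 0" and zM: "\<forall>j\<in>M. (\<Sum>i\<in>M. K i j) = 0"
    and tr: "(\<Sum>i\<in>P\<union>M. K i i) = 3"
  shows False
proof -
  have "even (\<Sum>i\<in>P. K i i)" using even_side[of P K] assms by blast
  moreover have "even (\<Sum>i\<in>M. K i i)" using even_side[of M K] assms by blast
  moreover have "(\<Sum>i\<in>P\<union>M. K i i) = (\<Sum>i\<in>P. K i i) + (\<Sum>i\<in>M. K i i)"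
    using assms by (simp add: sum.union_disjoint)
  ultimately show False using tr by (metis even_add odd_numeral)
qed

lemma comb:
  fixes f :: "nat \<Rightarrow> nat \<Rightarrow> nat"
  assumes fin: "finite P" "finite M" and s9: "(\<Sum>i\<in>P. \<Sum>j\<in>M. (f i j)^2) = 9"
    and pos: "\<forall>i\<in>P. \<forall>j\<in>M. f i j \<ge> 1"
    and cd: "card P + card M = 6 \<or> card P + card M = 8" and ne: "card P \<ge> 1" "card M \<ge> 1"
  shows "card P = 3 \<and> card M = 3 \<and> (\<forall>i\<in>P. \<forall>j\<in>M. f i j = 1)"
proof -
  define p q where "p = card P" and "q = card M"
  have s1: "(\<Sum>i\<in>P. \<Sum>j\<in>M. (f i j)^2 - 1) + p*q = 9"
  proof -
    have "(\<Sum>i\<in>P. \<Sum>j\<in>M. (f i j)^2) = (\<Sum>i\<in>P. \<Sum>j\<in>M. ((f i j)^2 - 1) + 1)"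
      using pos by (intro sum.cong refl) (auto simp: power2_eq_square Suc_le_eq)
    also have "\<dots> = (\<Sum>i\<in>P. \<Sum>j\<in>M. (f i j)^2 - 1) + p*q"
      by (simp only: sum.distrib sum_constant) (simp add: p_def q_def)
    finally show ?thesis using s9 by simp
  qed
  have pq9: "p * q \<le> 9" using s1 by linarith
  show ?thesis
  proof (cases "\<exists>i\<in>P. \<exists>j\<in>M. f i j \<ge> 3")
    case True
    then obtain i j where ij: "i \<in> P" "j \<in> M" "f i j \<ge> 3" by blast
    have "(f i j)^2 \<ge> 3^2" using ij(3) by (intro power_mono) auto
    then have "(f i j)^2 - 1 \<ge> 8" by simp
    moreover have "(f i j)^2 - 1 \<le> (\<Sum>j\<in>M. (f i j)^2 - 1)"
      using ij fin by (intro member_le_sum) auto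
    moreover have "(\<Sum>j\<in>M. (f i j)^2 - 1) \<le> (\<Sum>i\<in>P. \<Sum>j\<in>M. (f i j)^2 - 1)"
      using ij fin by (intro member_le_sum[where f="\<lambda>i. \<Sum>j\<in>M. (f i j)^2 - 1"]) auto
    ultimately have "p * q \<le> 1" using s1 by linarith
    moreover have "p \<le> p * q" "q \<le> p * q" using ne p_def q_def by simp_all
    ultimately have "p \<le> 1" "q \<le> 1" by linarith+
    then show ?thesis using cd p_def q_def by linarith
  next
    case False
    then have f12: "\<forall>i\<in>P. \<forall>j\<in>M. f i j = 1 \<or> f i j = 2" using pos by fastforce
    have t3: "3 dvd (f i j)^2 - 1" if "i \<in> P" "j \<in> M" for i j
    proof -
      have "f i j = 1 \<or> f i j = 2" using f12 that by blast
      then show ?thesis by (elim disjE) simp_all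
    qed
    have "3 dvd (\<Sum>i\<in>P. \<Sum>j\<in>M. (f i j)^2 - 1)"
      using t3 by (intro dvd_sum) auto
    moreover have "p * q = 9 - (\<Sum>i\<in>P. \<Sum>j\<in>M. (f i j)^2 - 1)" using s1 by linarith
    moreover have "(3::nat) dvd 9" by simp
    ultimately have d3: "3 dvd p * q" by (simp add: dvd_diff_nat)
    have "p = 3 \<and> q = 3"
    proof -
      have cd': "p + q = 6 \<or> p + q = 8" using cd p_def q_def by simp
      have "p \<le> 8" "q \<le> 8" using cd' by linarith+
      then have "p = 1 \<or> p = 2 \<or> p = 3 \<or> p = 4 \<or> p = 5 \<or> p = 6 \<or> p = 7 \<or> p = 8"
        "q = 1 \<or> q = 2 \<or> q = 3 \<or> q = 4 \<or> q = 5 \<or> q = 6 \<or> q = 7 \<or> q = 8"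
        using ne p_def q_def by auto
      then show ?thesis using cd' d3 pq9 by (elim disjE) simp_all
    qed
    then have "(\<Sum>i\<in>P. \<Sum>j\<in>M. (f i j)^2 - 1) = 0" using s1 by simp
    then have "\<forall>i\<in>P. \<forall>j\<in>M. (f i j)^2 - 1 = 0" using fin by simp
    then have "\<forall>i\<in>P. \<forall>j\<in>M. f i j = 1"
    proof (intro ballI)
      fix i j assume h: "\<forall>i\<in>P. \<forall>j\<in>M. (f i j)^2 - 1 = 0" "i \<in> P" "j \<in> M"
      then have "f i j * f i j \<le> 1" by (simp add: power2_eq_square)
      moreover have "f i j \<le> f i j * f i j" by (rule le_square)
      moreover have "1 \<le> f i j" using pos h by blast
      ultimately show "f i j = 1" by linarith
    qed
    then show ?thesis using \<open>p = 3 \<and> q = 3\<close> p_def q_def by simp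
  qed
qed

lemma frust:
  fixes K :: "nat \<Rightarrow> nat \<Rightarrow> int"
  assumes fin: "finite I" and dg: "\<forall>i\<in>I. 0 \<le> K i i \<and> K i i \<le> 2"
    and off: "\<forall>i\<in>I. \<forall>j\<in>I. i \<noteq> j \<longrightarrow> K i j \<le> 0"
    and gram: "\<forall>i\<in>I. \<forall>j\<in>I. (K i j)^2 = K i i * K j j"
    and tr: "(\<Sum>i\<in>I. K i i) = 3"
    and psd: "\<forall>T\<subseteq>I. 0 \<le> (\<Sum>i\<in>T. \<Sum>j\<in>T. K i j)"
  shows False
proof -
  define T where "T = {i\<in>I. K i i \<noteq> 0}"
  have TI: "T \<subseteq> I" and finT: "finite T" using fin by (auto simp: T_def)
  have trT: "(\<Sum>i\<in>T. K i i) = 3"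
    using tr fin by (subst sum.mono_neutral_left[of I T]) (auto simp: T_def)
  define t where "t = card T"
  have "(\<Sum>i\<in>T. K i i) \<le> (\<Sum>i\<in>T. 2)" using dg TI by (intro sum_mono) auto
  then have t2: "3 \<le> 2 * int t" using trT by (simp add: t_def)
  have offT: "K i j \<le> -1" if "i \<in> T" "j \<in> T" "i \<noteq> j" for i j
  proof -
    have "K i i \<ge> 1" "K j j \<ge> 1" using that dg by (auto simp: T_def)
    then have "K i i * K j j \<ge> 1" by (smt (verit) mult_le_cancel_left1)
    then have "K i j \<noteq> 0" using gram that TI by (metis in_mono power_zero_numeral zero_less_numeral not_one_le_zero)
    moreover have "K i j \<le> 0" using off that TI by auto
    ultimately show ?thesis by linarith
  qed
  have rows: "(\<Sum>j\<in>T. K i j) \<le> K i i - (int t - 1)" if i: "i \<in> T" for i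
  proof -
    have "(\<Sum>j\<in>T. K i j) = K i i + (\<Sum>j\<in>T-{i}. K i j)"
      using i finT by (simp add: sum.remove)
    also have "(\<Sum>j\<in>T-{i}. K i j) \<le> (\<Sum>j\<in>T-{i}. -1)" using offT i by (intro sum_mono) auto
    also have "(\<Sum>j\<in>T-{i}. (-1::int)) = - (int t - 1)"
    proof -
      have "card T > 0" using i finT card_gt_0_iff by blast
      then show ?thesis using i finT by (simp add: t_def card_Diff_singleton of_nat_diff)
    qed
    finally show ?thesis by simp
  qed
  have "0 \<le> (\<Sum>i\<in>T. \<Sum>j\<in>T. K i j)" using psd TI by blast
  also have "\<dots> \<le> (\<Sum>i\<in>T. K i i - (int t - 1))" using rows by (intro sum_mono) auto
  also have "\<dots> = 3 - int t * (int t - 1)" using trT by (simp add: sum_subtractf t_def)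
  finally have "int t * (int t - 1) \<le> 3" by simp
  then have "t = 2"
  proof -
    assume h: "int t * (int t - 1) \<le> 3"
    have "\<not> t \<ge> 3"
    proof
      assume "t \<ge> 3"
      then have "int t * (int t - 1) \<ge> 3 * 2" by (intro mult_mono) auto
      then show False using h by linarith
    qed
    then show "t = 2" using t2 by linarith
  qed
  then obtain a b where ab: "T = {a, b}" "a \<noteq> b" by (auto simp: t_def card_2_iff)
  have "K a a + K b b = 3" using trT ab by simp
  moreover have abT: "a \<in> T" "b \<in> T" using ab by auto
  then have "K a a \<noteq> 0" "K b b \<noteq> 0" "a \<in> I" "b \<in> I" by (auto simp: T_def)
  then have "1 \<le> K a a" "K a a \<le> 2" "1 \<le> K b b" "K b b \<le> 2" using dg by force+
  ultimately have "(K a a = 1 \<and> K b b = 2) \<or> (K a a = 2 \<and> K b b = 1)" by linarith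
  then have "K a a * K b b = 2" by auto
  then have "(K a b)^2 = 2" using gram ab TI by auto
  then show False using sq_ne_2 by blast
qed



context nimsetup begin

lemma nimD: "\<forall>i<n. \<forall>j<n. G 0 i j = (if i = j then 1 else 0)"
  "\<forall>l<8. \<forall>i<n. \<forall>j<n. G (conjp l) i j = G l j i"
  "\<forall>l<8. \<forall>m<8. \<forall>i<n. \<forall>j<n.
        real (\<Sum>k<n. G l i k * G m k j) = (\<Sum>v<8. fusionN l m v * real (G v i j))"
  using nim[unfolded is_nimrep_def] by blast+

lemma G0: "i < n \<Longrightarrow> j < n \<Longrightarrow> G 0 i j = (if i = j then 1 else 0)"
  using nimD(1) by simp

lemma Gsym: "l < 8 \<Longrightarrow> i < n \<Longrightarrow> j < n \<Longrightarrow> G l i j = G l j i"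
  using nimD(2) by (simp add: conjp_def)

lemma fus: "l < 8 \<Longrightarrow> m < 8 \<Longrightarrow> i < n \<Longrightarrow> j < n \<Longrightarrow>
    real (\<Sum>k<n. G l i k * G m k j) = (\<Sum>v<8. fusionN l m v * real (G v i j))"
  using nimD(3) by simp

lemma idx1:
  assumes "count_list mu m = 1"
  shows "\<exists>k. k < n \<and> mu ! k = m \<and> (\<forall>k'<n. mu ! k' = m \<longrightarrow> k' = k)"
proof -
  have "card {i. i < length mu \<and> m = mu ! i} = 1"
    using assms by (simp add: count_list_eq_length_filter length_filter_conv_card)
  then obtain k where eq: "{i. i < length mu \<and> m = mu ! i} = {k}" by (auto simp: card_1_singleton_iff)
  have "k \<in> {i. i < length mu \<and> m = mu ! i}" using eq by simp
  then have k: "k < n" "mu ! k = m" using len by auto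
  have "\<forall>k'<n. mu ! k' = m \<longrightarrow> k' = k"
  proof (intro allI impI)
    fix k' assume "k' < n" "mu ! k' = m"
    then have "k' \<in> {i. i < length mu \<and> m = mu ! i}" using len by simp
    then show "k' = k" using eq by simp
  qed
  then show ?thesis using k by blast
qed

definition kk :: "nat \<Rightarrow> nat" where "kk m = (SOME k. k < n \<and> mu ! k = m \<and> (\<forall>k'<n. mu ! k' = m \<longrightarrow> k' = k))"

lemma kk:
  assumes "count_list mu m = 1"
  shows "kk m < n" "mu ! kk m = m" "\<And>k'. k' < n \<Longrightarrow> mu ! k' = m \<Longrightarrow> k' = kk m"
  using someI_ex[OF idx1[OF assms]] unfolding kk_def by blast+

lemma sum_single:
  assumes "count_list mu m = 1"
  shows "(\<Sum>k<n. if mu!k = m then f k else 0) = f (kk m)"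
proof -
  have "(\<Sum>k<n. if mu!k = m then f k else 0) = (\<Sum>k<n. if k = kk m then f k else 0)"
  proof (intro sum.cong refl)
    fix k assume "k \<in> {..<n}"
    then have kn: "k < n" by simp
    show "(if mu!k = m then f k else 0) = (if k = kk m then f k else 0)"
    proof (cases "mu ! k = m")
      case True
      then have "k = kk m" by (rule kk(3)[OF assms kn])
      then show ?thesis using True by simp
    next
      case False
      then have "k \<noteq> kk m" using kk(2)[OF assms] by metis
      then show ?thesis using False by simp
    qed
  qed
  also have "\<dots> = f (kk m)" using kk(1)[OF assms] by simp
  finally show ?thesis .
qed

lemma sum_none:
  assumes "count_list mu m = 0"
  shows "(\<Sum>k<n. if mu!k = m then f k else 0) = 0"
proof -
  have nm: "m \<notin> set mu" using assms by (simp add: count_list_0_iff)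
  have "\<forall>k<n. mu ! k \<noteq> m"
  proof (intro allI impI)
    fix k assume "k < n"
    then have "mu ! k \<in> set mu" using len by simp
    then show "mu ! k \<noteq> m" using nm by auto
  qed
  then show ?thesis by simp
qed

lemma F3s:
  assumes "count_list mu m = 1" "m < 8" "i < n" "j < n"
  shows "U i (kk m) * cnj (U j (kk m)) = of_real (\<Sum>l<8. Smat 0 m * Smat l m * real (G l i j))"
proof -
  have "U i (kk m) * cnj (U j (kk m)) = (\<Sum>k<n. if mu!k = m then U i k * cnj (U j k) else 0)"
    by (rule sum_single[OF assms(1), of "\<lambda>k. U i k * cnj (U j k)", symmetric])
  also have "\<dots> = of_real (\<Sum>l<8. Smat 0 m * Smat l m * real (G l i j))" by (rule F3[OF assms(2-4)])
  finally show ?thesis .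
qed

lemma F3z:
  assumes "count_list mu m = 0" "m < 8" "i < n" "j < n"
  shows "(\<Sum>l<8. Smat 0 m * Smat l m * real (G l i j)) = 0"
proof -
  have "(of_real (\<Sum>l<8. Smat 0 m * Smat l m * real (G l i j)) :: complex)
        = (\<Sum>k<n. if mu!k = m then U i k * cnj (U j k) else 0)"
    by (rule F3[OF assms(2-4), symmetric])
  also have "\<dots> = 0" by (rule sum_none[OF assms(1)])
  finally show ?thesis by (simp only: of_real_eq_0_iff)
qed

lemma colnorm: assumes "m < n" shows "(\<Sum>i<n. U i m * cnj (U i m)) = 1"
proof -
  have "(\<Sum>i<n. cnj (U i m) * U i m) = (if m = m then 1 else 0)" by (rule orth[rule_format, OF assms assms])
  then show ?thesis by (simp add: mult.commute)
qed

lemma colorth: assumes "m < n" "m' < n" "m \<noteq> m'" shows "(\<Sum>i<n. cnj (U i m) * U i m') = 0"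
proof -
  have "(\<Sum>i<n. cnj (U i m) * U i m') = (if m = m' then 1 else 0)" by (rule orth[rule_format, OF assms(1,2)])
  then show ?thesis using assms(3) by simp
qed

end

lemma S0: "(\<Sum>l<8. Smat 0 0 * Smat l 0 * g l) = (g 0 + g 1 + 2*g 2 + 2*g 3 + 2*g 4 + 2*g 5 + 3*g 6 + 3*g 7)/36"
  unfolding sum8 by (simp add: Smat_def S6_def field_simps)
lemma S1: "(\<Sum>l<8. Smat 0 1 * Smat l 1 * g l) = (g 0 + g 1 + 2*g 2 + 2*g 3 + 2*g 4 + 2*g 5 - 3*g 6 - 3*g 7)/36"
  unfolding sum8 by (simp add: Smat_def S6_def field_simps)
lemma S2: "(\<Sum>l<8. Smat 0 2 * Smat l 2 * g l) = (g 0 + g 1 + 2*g 2 - g 3 - g 4 - g 5)/9"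
  unfolding sum8 by (simp add: Smat_def S6_def field_simps)
lemma S3: "(\<Sum>l<8. Smat 0 3 * Smat l 3 * g l) = (g 0 + g 1 - g 2 + 2*g 3 - g 4 - g 5)/9"
  unfolding sum8 by (simp add: Smat_def S6_def field_simps)
lemma S4: "(\<Sum>l<8. Smat 0 4 * Smat l 4 * g l) = (g 0 + g 1 - g 2 - g 3 - g 4 + 2*g 5)/9"
  unfolding sum8 by (simp add: Smat_def S6_def field_simps)
lemma S6: "(\<Sum>l<8. Smat 0 6 * Smat l 6 * g l) = (g 0 - g 1 + g 6 - g 7)/4"
  unfolding sum8 by (simp add: Smat_def S6_def field_simps)
lemma S7: "(\<Sum>l<8. Smat 0 7 * Smat l 7 * g l) = (g 0 - g 1 - g 6 + g 7)/4"
  unfolding sum8 by (simp add: Smat_def S6_def field_simps)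
lemma N66: "(\<Sum>v<8. fusionN 6 6 v * g v) = g 0 + g 2 + g 3 + g 4 + g 5"
  unfolding sum8 fusionN_def by (simp add: Smat_def S6_def field_simps)
lemma psi64: "Smat 6 4 / Smat 0 4 = 0"
  by (simp add: Smat_def S6_def)



lemma gram_c: "((a::complex) * cnj b) * cnj (a * cnj b) = (a * cnj a) * (b * cnj b)"
  by (simp add: mult_ac)

locale nimZ = nimsetup +
  assumes c0: "count_list mu 0 = 1" and c1: "count_list mu 1 = 1" and c4: "count_list mu 4 = 1"
    and c6: "count_list mu 6 = 0" and c7: "count_list mu 7 = 0"
begin

definition xv where "xv i = U i (kk 0)"
definition yv where "yv i = U i (kk 1)"
definition zv where "zv i = U i (kk 4)"

lemma G17:
  assumes "i < n" "j < n"
  shows "G 1 i j = G 0 i j" "G 7 i j = G 6 i j"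
proof -
  have a: "(\<Sum>l<8. Smat 0 6 * Smat l 6 * real (G l i j)) = 0" by (rule F3z[OF c6]) (use assms in auto)
  have b: "(\<Sum>l<8. Smat 0 7 * Smat l 7 * real (G l i j)) = 0" by (rule F3z[OF c7]) (use assms in auto)
  have "real (G 0 i j) - real (G 1 i j) + real (G 6 i j) - real (G 7 i j) = 0"
    using a unfolding S6 by simp
  moreover have "real (G 0 i j) - real (G 1 i j) - real (G 6 i j) + real (G 7 i j) = 0"
    using b unfolding S7 by simp
  ultimately have "real (G 1 i j) = real (G 0 i j)" "real (G 7 i j) = real (G 6 i j)" by linarith+
  then show "G 1 i j = G 0 i j" "G 7 i j = G 6 i j" by simp_all
qed

definition Am :: "nat \<Rightarrow> nat \<Rightarrow> nat" where
  "Am i j = G 0 i j + G 1 i j + 2*G 2 i j + 2*G 3 i j + 2*G 4 i j + 2*G 5 i j + 3*G 6 i j + 3*G 7 i j"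

lemma X:
  assumes "i < n" "j < n"
  shows "36 * (xv i * cnj (xv j)) = of_nat (Am i j)"
proof -
  have "xv i * cnj (xv j) = of_real (\<Sum>l<8. Smat 0 0 * Smat l 0 * real (G l i j))"
    unfolding xv_def by (rule F3s[OF c0]) (use assms in auto)
  also have "\<dots> = of_real (real (Am i j) / 36)" unfolding S0 by (simp add: Am_def)
  finally have h: "xv i * cnj (xv j) = of_real (real (Am i j) / 36)" .
  have "36 * (xv i * cnj (xv j)) = 36 * of_real (real (Am i j) / 36)" by (simp only: h)
  also have "\<dots> = of_nat (Am i j)" by simp
  finally show ?thesis .
qed

definition Bm :: "nat \<Rightarrow> nat \<Rightarrow> int" where "Bm i j = int (Am i j) - 12 * int (G 6 i j)"

lemma Y:
  assumes "i < n" "j < n"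
  shows "36 * (yv i * cnj (yv j)) = of_int (Bm i j)"
proof -
  have "yv i * cnj (yv j) = of_real (\<Sum>l<8. Smat 0 1 * Smat l 1 * real (G l i j))"
    unfolding yv_def by (rule F3s[OF c1]) (use assms in auto)
  also have "\<dots> = of_real (real_of_int (Bm i j) / 36)" unfolding S1
    using G17[OF assms] by (simp add: Am_def Bm_def)
  finally have h: "yv i * cnj (yv j) = of_real (real_of_int (Bm i j) / 36)" .
  have "36 * (yv i * cnj (yv j)) = 36 * of_real (real_of_int (Bm i j) / 36)" by (simp only: h)
  also have "\<dots> = of_int (Bm i j)" by simp
  finally show ?thesis .
qed

lemma Am_ii: "i < n \<Longrightarrow> Am i i \<ge> 2"
  using G0[of i i] G17[of i i] by (simp add: Am_def)

lemma Am_sym: assumes "i < n" "j < n" shows "Am i j = Am j i"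
proof -
  have "G l i j = G l j i" if "l < 8" for l using Gsym that assms by blast
  from this[of 0] this[of 1] this[of 2] this[of 3] this[of 4] this[of 5] this[of 6] this[of 7]
  show ?thesis unfolding Am_def by simp
qed

lemma k01: "kk 0 < n" "kk 1 < n" "kk 4 < n" "kk 0 \<noteq> kk 1"
  using kk(1)[OF c0] kk(1)[OF c1] kk(1)[OF c4] kk(2)[OF c0] kk(2)[OF c1] by (metis zero_neq_one)+

lemma sumA: "(\<Sum>i<n. Am i i) = 36"
proof -
  have "(\<Sum>i<n. 36 * (xv i * cnj (xv i))) = 36"
    using colnorm[OF k01(1)] by (simp add: sum_distrib_left[symmetric] xv_def)
  moreover have "(\<Sum>i<n. 36 * (xv i * cnj (xv i))) = (\<Sum>i<n. (of_nat (Am i i) :: complex))"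
    using X by (intro sum.cong) auto
  ultimately have "(of_nat (\<Sum>i<n. Am i i) :: complex) = of_nat 36" by simp
  then show ?thesis by (simp only: of_nat_eq_iff)
qed

lemma n_pos: "n > 0"
  using sumA by (cases n) auto

lemma g6diag: "i < n \<Longrightarrow> G 6 i i = 0"
proof -
  have "(\<Sum>i<n. 36 * (yv i * cnj (yv i))) = 36"
    using colnorm[OF k01(2)] by (simp add: sum_distrib_left[symmetric] yv_def)
  moreover have "(\<Sum>i<n. 36 * (yv i * cnj (yv i))) = (\<Sum>i<n. (of_int (Bm i i) :: complex))"
    using Y by (intro sum.cong) auto
  ultimately have "(of_int (\<Sum>i<n. Bm i i) :: complex) = of_int 36" by simp
  then have "(\<Sum>i<n. Bm i i) = 36" by (simp only: of_int_eq_iff)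
  then have h1: "int (\<Sum>i<n. Am i i) - 12 * int (\<Sum>i<n. G 6 i i) = 36"
    by (simp add: Bm_def sum_subtractf sum_distrib_left)
  have "int (\<Sum>i<n. Am i i) = 36" unfolding sumA by simp
  then have "int (\<Sum>i<n. G 6 i i) = 0" using h1 by linarith
  then have "(\<Sum>i<n. G 6 i i) = 0" by (simp only: of_nat_eq_0_iff)
  then show "i < n \<Longrightarrow> G 6 i i = 0" by simp
qed

lemma Bm_ii: "i < n \<Longrightarrow> Bm i i = int (Am i i)"
  using g6diag by (simp add: Bm_def)

lemma AA:
  assumes "i < n" "j < n"
  shows "(Am i j)^2 = Am i i * Am j j"
proof -
  have e1: "36 * (xv i * cnj (xv j)) = of_nat (Am i j)" by (rule X[OF assms])
  have e2: "36 * cnj (xv i * cnj (xv j)) = of_nat (Am i j)"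
    using arg_cong[OF e1, of cnj] by simp
  have "(of_nat ((Am i j)^2) :: complex) = (36 * (xv i * cnj (xv j))) * (36 * cnj (xv i * cnj (xv j)))"
    using e1 e2 by (simp add: power2_eq_square)
  also have "\<dots> = (36 * (xv i * cnj (xv i))) * (36 * (xv j * cnj (xv j)))"
    using gram_c[of "xv i" "xv j"] by (simp add: mult_ac)
  also have "\<dots> = of_nat (Am i i * Am j j)" using X assms by simp
  finally show ?thesis by (simp only: of_nat_eq_iff)
qed

lemma BB:
  assumes "i < n" "j < n"
  shows "(Bm i j)^2 = int (Am i i) * int (Am j j)"
proof -
  have e1: "36 * (yv i * cnj (yv j)) = of_int (Bm i j)" by (rule Y[OF assms])
  have e2: "36 * cnj (yv i * cnj (yv j)) = of_int (Bm i j)"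
    using arg_cong[OF e1, of cnj] by simp
  have "(of_int ((Bm i j)^2) :: complex) = (36 * (yv i * cnj (yv j))) * (36 * cnj (yv i * cnj (yv j)))"
    using e1 e2 by (simp add: power2_eq_square)
  also have "\<dots> = (36 * (yv i * cnj (yv i))) * (36 * (yv j * cnj (yv j)))"
    using gram_c[of "yv i" "yv j"] by (simp add: mult_ac)
  also have "\<dots> = of_int (int (Am i i) * int (Am j j))" using Y assms Bm_ii by simp
  finally show ?thesis by (simp only: of_int_eq_iff)
qed

lemma g_or:
  assumes "i < n" "j < n"
  shows "G 6 i j = 0 \<or> Am i j = 6 * G 6 i j"
proof -
  have "(int (Am i j) - 12 * int (G 6 i j))^2 = (int (Am i j))^2"
    using BB[OF assms] AA[OF assms] by (simp add: Bm_def flip: of_nat_power)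
  then have "24 * int (G 6 i j) * (6 * int (G 6 i j) - int (Am i j)) = 0"
    by (simp add: power2_eq_square algebra_simps)
  then show ?thesis by auto
qed

end


context nimZ begin

definition ee :: "nat \<Rightarrow> int" where "ee i = (if G 6 i 0 = 0 then 1 else -1)"

lemma Yi0: assumes "i < n" shows "36 * (yv i * cnj (yv 0)) = of_int (ee i * int (Am i 0))"
proof -
  have "36 * (yv i * cnj (yv 0)) = of_int (Bm i 0)" by (rule Y[OF assms n_pos])
  moreover have "Bm i 0 = ee i * int (Am i 0)"
  proof (cases "G 6 i 0 = 0")
    case True then show ?thesis by (simp add: Bm_def ee_def)
  next
    case False
    then have "Am i 0 = 6 * G 6 i 0" using g_or[OF assms n_pos] by auto
    then show ?thesis using False by (simp add: Bm_def ee_def)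
  qed
  ultimately show ?thesis by simp
qed

lemma X00: "xv 0 * cnj (xv 0) \<noteq> 0"
proof
  assume "xv 0 * cnj (xv 0) = 0"
  then have "(of_nat (Am 0 0) :: complex) = 0" using X[OF n_pos n_pos] by simp
  then show False using Am_ii[OF n_pos] by simp
qed

lemma Y00: "yv 0 * cnj (yv 0) = xv 0 * cnj (xv 0)"
proof -
  have "36 * (yv 0 * cnj (yv 0)) = 36 * (xv 0 * cnj (xv 0))"
    using Y[OF n_pos n_pos] X[OF n_pos n_pos] Bm_ii[OF n_pos] by simp
  then show ?thesis by simp
qed

lemma Yij:
  assumes "i < n" "j < n"
  shows "yv i * cnj (yv j) = of_int (ee i * ee j) * (xv i * cnj (xv j))"
proof -
  have r1: "(yv i * cnj (yv j)) * (yv 0 * cnj (yv 0)) = (yv i * cnj (yv 0)) * cnj (yv j * cnj (yv 0))"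
    by (simp add: mult_ac)
  have r2: "(xv i * cnj (xv j)) * (xv 0 * cnj (xv 0)) = (xv i * cnj (xv 0)) * cnj (xv j * cnj (xv 0))"
    by (simp add: mult_ac)
  have a1: "36 * (yv i * cnj (yv 0)) = of_int (ee i) * of_nat (Am i 0)" using Yi0[OF assms(1)] by simp
  have a2: "36 * cnj (yv j * cnj (yv 0)) = of_int (ee j) * of_nat (Am j 0)"
    using arg_cong[OF Yi0[OF assms(2)], of cnj] by simp
  have b1: "36 * (xv i * cnj (xv 0)) = of_nat (Am i 0)" using X[OF assms(1) n_pos] .
  have b2: "36 * cnj (xv j * cnj (xv 0)) = of_nat (Am j 0)"
    using arg_cong[OF X[OF assms(2) n_pos], of cnj] by simp
  have "(36*36) * ((yv i * cnj (yv j)) * (xv 0 * cnj (xv 0)))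
      = (36 * (yv i * cnj (yv 0))) * (36 * cnj (yv j * cnj (yv 0)))"
    using r1 Y00 by (simp add: mult_ac)
  also have "\<dots> = of_int (ee i * ee j) * ((36 * (xv i * cnj (xv 0))) * (36 * cnj (xv j * cnj (xv 0))))"
    using a1 a2 b1 b2 by (simp add: mult_ac)
  also have "\<dots> = (36*36) * ((of_int (ee i * ee j) * (xv i * cnj (xv j))) * (xv 0 * cnj (xv 0)))"
    using r2 by (simp add: mult_ac)
  finally have "(yv i * cnj (yv j)) * (xv 0 * cnj (xv 0))
      = (of_int (ee i * ee j) * (xv i * cnj (xv j))) * (xv 0 * cnj (xv 0))"
    by (simp only: mult_cancel_left) simp
  then show ?thesis using X00 by (simp only: mult_cancel_right) simp
qed

lemma G6ij:
  assumes "i < n" "j < n"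
  shows "12 * int (G 6 i j) = (1 - ee i * ee j) * int (Am i j)"
proof -
  have h: "36 * (yv i * cnj (yv j)) = of_int (ee i * ee j) * (36 * (xv i * cnj (xv j)))"
    using Yij[OF assms] by (simp add: mult_ac)
  have "(of_int (12 * int (G 6 i j)) :: complex) = 36 * (xv i * cnj (xv j)) - 36 * (yv i * cnj (yv j))"
    using X[OF assms] Y[OF assms] by (simp add: Bm_def)
  also have "\<dots> = of_int ((1 - ee i * ee j) * int (Am i j))"
    unfolding h X[OF assms] by (simp add: algebra_simps)
  finally show ?thesis by (simp only: of_int_eq_iff)
qed

lemma sum_e: "(\<Sum>i<n. ee i * int (Am i i)) = 0"
proof -
  have orthXY: "(\<Sum>i<n. cnj (xv i) * yv i) = 0"
    using colorth[OF k01(1) k01(2) k01(4)] by (simp add: xv_def yv_def)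
  have "0 = 36 * cnj (yv 0) * (\<Sum>i<n. cnj (xv i) * yv i)" using orthXY by simp
  also have "\<dots> = (\<Sum>i<n. 36 * cnj (yv 0) * (cnj (xv i) * yv i))" by (rule sum_distrib_left)
  also have "\<dots> = (\<Sum>i<n. cnj (xv i) * (36 * (yv i * cnj (yv 0))))"
    by (intro sum.cong refl) (simp only: mult.assoc mult.commute mult.left_commute)
  also have "\<dots> = (\<Sum>i<n. cnj (xv i) * (of_int (ee i) * (36 * (xv i * cnj (xv 0)))))"
  proof (intro sum.cong refl)
    fix i assume "i \<in> {..<n}"
    then have i: "i < n" by simp
    show "cnj (xv i) * (36 * (yv i * cnj (yv 0))) = cnj (xv i) * (of_int (ee i) * (36 * (xv i * cnj (xv 0))))"
      unfolding Yi0[OF i] X[OF i n_pos] by simp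
  qed
  also have "\<dots> = (\<Sum>i<n. cnj (xv 0) * (of_int (ee i) * (36 * (xv i * cnj (xv i)))))"
    by (intro sum.cong refl) (simp only: mult.assoc mult.commute mult.left_commute)
  also have "\<dots> = cnj (xv 0) * (\<Sum>i<n. of_int (ee i) * (36 * (xv i * cnj (xv i))))"
    by (rule sum_distrib_left[symmetric])
  also have "(\<Sum>i<n. of_int (ee i) * (36 * (xv i * cnj (xv i)))) = (\<Sum>i<n. (of_int (ee i * int (Am i i)) :: complex))"
  proof (intro sum.cong refl)
    fix i assume "i \<in> {..<n}"
    then have i: "i < n" by simp
    show "of_int (ee i) * (36 * (xv i * cnj (xv i))) = (of_int (ee i * int (Am i i)) :: complex)"
      unfolding X[OF i i] by simp
  qed
  also have "\<dots> = of_int (\<Sum>i<n. ee i * int (Am i i))" by (rule of_int_sum[symmetric])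
  finally have h: "cnj (xv 0) * of_int (\<Sum>i<n. ee i * int (Am i i)) = 0" by simp
  have "cnj (xv 0) \<noteq> 0" using X00 by auto
  then have "(of_int (\<Sum>i<n. ee i * int (Am i i)) :: complex) = 0" using h by simp
  then show ?thesis by (simp only: of_int_eq_0_iff)
qed

definition PP where "PP = {i. i < n \<and> ee i = 1}"
definition MM where "MM = {i. i < n \<and> ee i = -1}"

lemma ee_vals: "ee i = 1 \<or> ee i = -1" by (simp add: ee_def)

lemma PM1: "PP \<union> MM = {..<n}"
  unfolding PP_def MM_def using ee_vals by auto
lemma PM2: "PP \<inter> MM = {}"
  unfolding PP_def MM_def by auto
lemma PM3: "finite PP" unfolding PP_def by (rule finite_subset[of _ "{..<n}"]) auto
lemma PM4: "finite MM" unfolding MM_def by (rule finite_subset[of _ "{..<n}"]) auto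
lemma PM5: "0 \<in> PP" unfolding PP_def ee_def using g6diag[OF n_pos] n_pos by simp
lemmas PM = PM1 PM2 PM3 PM4 PM5

lemma split_sum: "(\<Sum>k<n. f k) = (\<Sum>k\<in>PP. f k) + (\<Sum>k\<in>MM. f k)"
  unfolding PM1[symmetric] by (rule sum.union_disjoint[OF PM3 PM4 PM2])

lemma sums18: "(\<Sum>i\<in>PP. Am i i) = 18" "(\<Sum>i\<in>MM. Am i i) = 18"
proof -
  have s: "(\<Sum>i\<in>PP. Am i i) + (\<Sum>i\<in>MM. Am i i) = 36"
    using sumA unfolding split_sum .
  have "(\<Sum>i<n. ee i * int (Am i i)) = (\<Sum>i\<in>PP. ee i * int (Am i i)) + (\<Sum>i\<in>MM. ee i * int (Am i i))"
    by (rule split_sum)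
  also have "(\<Sum>i\<in>PP. ee i * int (Am i i)) = int (\<Sum>i\<in>PP. Am i i)"
    by (simp add: PP_def)
  also have "(\<Sum>i\<in>MM. ee i * int (Am i i)) = - int (\<Sum>i\<in>MM. Am i i)"
    by (simp add: MM_def sum_negf)
  finally have "(\<Sum>i\<in>PP. int (Am i i)) = (\<Sum>i\<in>MM. int (Am i i))" using sum_e by simp
  then have "int (\<Sum>i\<in>PP. Am i i) = int (\<Sum>i\<in>MM. Am i i)" by (simp only: of_nat_sum)
  then have "(\<Sum>i\<in>PP. Am i i) = (\<Sum>i\<in>MM. Am i i)" by (simp only: of_nat_eq_iff)
  then show "(\<Sum>i\<in>PP. Am i i) = 18" "(\<Sum>i\<in>MM. Am i i) = 18" using s by linarith+
qed

lemma ee_cases: "i < n \<Longrightarrow> i \<in> PP \<or> i \<in> MM"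
  by (auto simp: PP_def MM_def ee_def)

lemma same_side: "i < n \<Longrightarrow> j < n \<Longrightarrow> ee i = ee j \<Longrightarrow> G 6 i j = 0"
  using G6ij[of i j] by (auto simp: ee_def split: if_splits)

lemma cross: "i \<in> PP \<Longrightarrow> j \<in> MM \<Longrightarrow> Am i j = 6 * G 6 i j"
  using G6ij[of i j] by (auto simp: PP_def MM_def)

lemma cross_pos: assumes "i \<in> PP" "j \<in> MM" shows "G 6 i j \<ge> 1"
proof -
  have ij: "i < n" "j < n" using assms by (auto simp: PP_def MM_def)
  have "2 * 2 \<le> Am i i * Am j j" by (rule mult_le_mono[OF Am_ii[OF ij(1)] Am_ii[OF ij(2)]])
  then have "(Am i j)^2 \<ge> 2 * 2" using AA[OF ij] by simp
  then have "Am i j \<noteq> 0" by (cases "Am i j") auto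
  then show ?thesis using cross[OF assms] by simp
qed

lemma cross9: "(\<Sum>i\<in>PP. \<Sum>j\<in>MM. (G 6 i j)^2) = 9"
proof -
  have "36 * (\<Sum>i\<in>PP. \<Sum>j\<in>MM. (G 6 i j)^2) = (\<Sum>i\<in>PP. \<Sum>j\<in>MM. Am i i * Am j j)"
  proof -
    have "36 * (\<Sum>i\<in>PP. \<Sum>j\<in>MM. (G 6 i j)^2) = (\<Sum>i\<in>PP. \<Sum>j\<in>MM. 36 * (G 6 i j)^2)"
      by (simp add: sum_distrib_left)
    also have "\<dots> = (\<Sum>i\<in>PP. \<Sum>j\<in>MM. Am i i * Am j j)"
    proof (intro sum.cong refl)
      fix i j assume ij: "i \<in> PP" "j \<in> MM"
      then have ij': "i < n" "j < n" by (auto simp: PP_def MM_def)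
      have "36 * (G 6 i j)^2 = (Am i j)^2" using cross[OF ij] by (simp add: power2_eq_square)
      then show "36 * (G 6 i j)^2 = Am i i * Am j j" using AA[OF ij'] by simp
    qed
    finally show ?thesis .
  qed
  also have "\<dots> = (\<Sum>i\<in>PP. Am i i) * (\<Sum>j\<in>MM. Am j j)" by (simp add: sum_product)
  also have "\<dots> = 324" using sums18 by simp
  finally show ?thesis by simp
qed

lemma cardPM: "card PP + card MM = n" "card PP \<ge> 1" "card MM \<ge> 1"
proof -
  show "card PP + card MM = n" using PM card_Un_disjoint[of PP MM] by simp
  show "card PP \<ge> 1" using PM by (metis One_nat_def Suc_leI card_gt_0_iff empty_iff)
  have "MM \<noteq> {}" using sums18(2) by auto
  then show "card MM \<ge> 1" using PM by (metis One_nat_def Suc_leI card_gt_0_iff)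
qed

lemma struct:
  assumes "n = 6 \<or> n = 8"
  shows "n = 6" "card PP = 3" "card MM = 3" "\<forall>i\<in>PP. \<forall>j\<in>MM. G 6 i j = 1"
proof -
  have "card PP = 3 \<and> card MM = 3 \<and> (\<forall>i\<in>PP. \<forall>j\<in>MM. G 6 i j = 1)"
    by (rule comb[OF PM(3,4) cross9]) (use cross_pos cardPM assms in auto)
  then show "n = 6" "card PP = 3" "card MM = 3" "\<forall>i\<in>PP. \<forall>j\<in>MM. G 6 i j = 1"
    using cardPM by auto
qed

end


context nimZ begin


lemma inPP: "k \<in> PP \<Longrightarrow> k < n \<and> ee k = 1" by (simp add: PP_def)
lemma inMM: "k \<in> MM \<Longrightarrow> k < n \<and> ee k = -1" by (simp add: MM_def)

lemma G6side:
  assumes n6: "n = 6" and ik: "i < n" "k < n"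
  shows "G 6 i k = (if ee i = ee k then 0 else 1)"
proof (cases "ee i = ee k")
  case True then show ?thesis using same_side[OF ik] by simp
next
  case False
  have st: "\<forall>i\<in>PP. \<forall>j\<in>MM. G 6 i j = 1" using struct(4) n6 by blast
  show ?thesis
  proof (cases "ee i = 1")
    case True
    then have "i \<in> PP" "k \<in> MM" using False ik ee_vals[of k] by (auto simp: PP_def MM_def)
    then show ?thesis using st False by simp
  next
    case f2: False
    then have "k \<in> PP" "i \<in> MM" using False ik ee_vals[of k] ee_vals[of i] by (auto simp: PP_def MM_def)
    then have "G 6 k i = 1" using st by simp
    then show ?thesis using Gsym[of 6 k i] ik False by simp
  qed
qed


lemma sq6:
  assumes n6: "n = 6" and ij: "i < n" "j < n"
  shows "(\<Sum>k<n. G 6 i k * G 6 k j) = (if ee i = ee j then 3 else 0)"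
proof -
  have cP: "card PP = 3" and cM: "card MM = 3" using struct n6 by auto
  have a: "(\<Sum>k\<in>PP. G 6 i k * G 6 k j) = (\<Sum>k\<in>PP. (if ee i = 1 then 0 else 1) * (if 1 = ee j then 0 else 1))"
  proof (intro sum.cong refl)
    fix k assume "k \<in> PP"
    then have k: "k < n" "ee k = 1" by (auto simp: PP_def)
    show "G 6 i k * G 6 k j = (if ee i = 1 then 0 else 1) * (if 1 = ee j then 0 else 1)"
      using G6side[OF n6 ij(1) k(1)] G6side[OF n6 k(1) ij(2)] k by simp
  qed
  have b: "(\<Sum>k\<in>MM. G 6 i k * G 6 k j) = (\<Sum>k\<in>MM. (if ee i = -1 then 0 else 1) * (if -1 = ee j then 0 else 1))"
  proof (intro sum.cong refl)
    fix k assume "k \<in> MM"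
    then have k: "k < n" "ee k = -1" by (auto simp: MM_def)
    show "G 6 i k * G 6 k j = (if ee i = -1 then 0 else 1) * (if -1 = ee j then 0 else 1)"
      using G6side[OF n6 ij(1) k(1)] G6side[OF n6 k(1) ij(2)] k by simp
  qed
  show ?thesis unfolding split_sum a b using cP cM ee_vals[of i] ee_vals[of j] by auto
qed

definition KK :: "nat \<Rightarrow> nat \<Rightarrow> int" where
  "KK i j = int (G 0 i j) - (if ee i = ee j then 1 else 0) + int (G 5 i j)"

lemma Zk:
  assumes n6: "n = 6" and ij: "i < n" "j < n"
  shows "3 * (zv i * cnj (zv j)) = of_int (KK i j)"
proof -
  have z: "zv i * cnj (zv j) = of_real (\<Sum>l<8. Smat 0 4 * Smat l 4 * real (G l i j))"
    unfolding zv_def by (rule F3s[OF c4]) (use ij in auto)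
  have f: "real (\<Sum>k<n. G 6 i k * G 6 k j) = (\<Sum>v<8. fusionN 6 6 v * real (G v i j))"
    by (rule fus) (use ij in auto)
  have f2: "real (G 0 i j) + real (G 2 i j) + real (G 3 i j) + real (G 4 i j) + real (G 5 i j)
      = (if ee i = ee j then 3 else 0)"
    using f unfolding N66 sq6[OF n6 ij] by (simp split: if_splits)
  have g1: "real (G 1 i j) = real (G 0 i j)" using G17[OF ij] by simp
  have "(\<Sum>l<8. Smat 0 4 * Smat l 4 * real (G l i j)) = real_of_int (KK i j) / 3"
    unfolding S4 KK_def using f2 g1 by (simp split: if_splits)
  then have r: "zv i * cnj (zv j) = of_real (real_of_int (KK i j) / 3)" unfolding z by (simp only:)
  have "3 * (zv i * cnj (zv j)) = 3 * of_real (real_of_int (KK i j) / 3)" by (simp only: r)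
  also have "\<dots> = of_int (KK i j)" by simp
  finally show ?thesis .
qed

lemma G6z:
  assumes "i < n"
  shows "(\<Sum>k<n. of_nat (G 6 i k) * zv k) = 0"
proof -
  have "(\<Sum>k<n. of_nat (G 6 i k) * U k (kk 4))
      = U i (kk 4) * complex_of_real (Smat 6 (mu ! kk 4) / Smat 0 (mu ! kk 4))"
    using eig assms k01(3) by simp
  then show ?thesis using kk(2)[OF c4] psi64 by (simp add: zv_def)
qed

lemma sideM: assumes n6: "n = 6" shows "(\<Sum>k\<in>MM. zv k) = 0"
proof -
  have h: "(\<Sum>k<n. of_nat (G 6 0 k) * zv k) = 0" by (rule G6z[OF n_pos])
  have e0: "ee 0 = 1" using PM(5) by (simp add: PP_def)
  have "(\<Sum>k\<in>PP. of_nat (G 6 0 k) * zv k) = 0"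
    using G6side[OF n6 n_pos] e0 by (intro sum.neutral) (auto simp: PP_def)
  moreover have "(\<Sum>k\<in>MM. of_nat (G 6 0 k) * zv k) = (\<Sum>k\<in>MM. zv k)"
    using G6side[OF n6 n_pos] e0 by (intro sum.cong) (auto simp: MM_def)
  ultimately show ?thesis using h unfolding split_sum by simp
qed

lemma sideP: assumes n6: "n = 6" shows "(\<Sum>k\<in>PP. zv k) = 0"
proof -
  have "MM \<noteq> {}" using struct(3)[of] n6 by auto
  then obtain m where m: "m \<in> MM" by blast
  then have mn: "m < n" "ee m = -1" by (auto simp: MM_def)
  have h: "(\<Sum>k<n. of_nat (G 6 m k) * zv k) = 0" by (rule G6z[OF mn(1)])
  have "(\<Sum>k\<in>MM. of_nat (G 6 m k) * zv k) = 0"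
    using G6side[OF n6 mn(1)] mn by (intro sum.neutral) (auto simp: MM_def)
  moreover have "(\<Sum>k\<in>PP. of_nat (G 6 m k) * zv k) = (\<Sum>k\<in>PP. zv k)"
    using G6side[OF n6 mn(1)] mn by (intro sum.cong) (auto simp: PP_def)
  ultimately show ?thesis using h unfolding split_sum by simp
qed

lemma gram_int:
  fixes a b :: complex and k :: int and kii kjj :: int
  assumes "3 * (a * cnj b) = of_int k" "3 * (a * cnj a) = of_int kii" "3 * (b * cnj b) = of_int kjj"
  shows "k^2 = kii * kjj"
proof -
  have e2: "3 * cnj (a * cnj b) = of_int k" using arg_cong[OF assms(1), of cnj] by simp
  have "(of_int (k^2) :: complex) = (3 * (a * cnj b)) * (3 * cnj (a * cnj b))"
    using assms(1) e2 by (simp add: power2_eq_square)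
  also have "\<dots> = (3 * (a * cnj a)) * (3 * (b * cnj b))"
    using gram_c[of a b] by (simp add: mult_ac)
  also have "\<dots> = of_int (kii * kjj)" using assms by simp
  finally show ?thesis by (simp only: of_int_eq_iff)
qed

lemma trace3:
  assumes "\<And>i. i < n \<Longrightarrow> 3 * (zv i * cnj (zv i)) = of_int (k i)"
  shows "(\<Sum>i<n. k i) = 3"
proof -
  have "(\<Sum>i<n. 3 * (zv i * cnj (zv i))) = 3"
    using colnorm[OF k01(3)] by (simp add: sum_distrib_left[symmetric] zv_def)
  moreover have "(\<Sum>i<n. 3 * (zv i * cnj (zv i))) = (\<Sum>i<n. (of_int (k i) :: complex))"
    using assms by (intro sum.cong) auto
  ultimately have "(of_int (\<Sum>i<n. k i) :: complex) = of_int 3" by simp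
  then show ?thesis by (simp only: of_int_eq_iff)
qed

theorem n6_false: "n \<noteq> 6"
proof
  assume n6: "n = 6"
  have U: "PP \<union> MM = {..<n}" using PM by simp
  have gram: "\<forall>i\<in>PP\<union>MM. \<forall>j\<in>PP\<union>MM. (KK i j)^2 = KK i i * KK j j"
    unfolding U using Zk[OF n6] by (auto intro: gram_int)
  have colsum: "(\<Sum>i\<in>S. KK i j) = 0" if S: "S = PP \<or> S = MM" and j: "j < n" for S j
  proof -
    have sz: "(\<Sum>i\<in>S. zv i) = 0" using S sideP[OF n6] sideM[OF n6] by auto
    have SS: "S \<subseteq> {..<n}" using S U by auto
    have "(of_int (\<Sum>i\<in>S. KK i j) :: complex) = (\<Sum>i\<in>S. of_int (KK i j))"
      by (rule of_int_sum)
    also have "\<dots> = (\<Sum>i\<in>S. 3 * (zv i * cnj (zv j)))"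
    proof (intro sum.cong refl)
      fix i assume "i \<in> S"
      then have i: "i < n" using SS by auto
      show "(of_int (KK i j) :: complex) = 3 * (zv i * cnj (zv j))" using Zk[OF n6 i j] by simp
    qed
    also have "\<dots> = 3 * (\<Sum>i\<in>S. zv i) * cnj (zv j)"
      by (simp add: sum_distrib_left sum_distrib_right mult_ac)
    also have "\<dots> = 0" using sz by simp
    finally show ?thesis by (simp only: of_int_eq_0_iff)
  qed
  have zP: "\<forall>j\<in>PP. (\<Sum>i\<in>PP. KK i j) = 0" using colsum by (auto simp: PP_def)
  have zM: "\<forall>j\<in>MM. (\<Sum>i\<in>MM. KK i j) = 0" using colsum by (auto simp: MM_def)
  have tr: "(\<Sum>i\<in>PP\<union>MM. KK i i) = 3" unfolding U by (rule trace3) (use Zk[OF n6] in auto)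
  show False by (rule parity[OF PM(3) PM(4) PM(2) gram zP zM tr])
qed

theorem n8_false: "n \<noteq> 8"
  using struct(1) by auto

end

locale nimZ21 = nimZ +
  assumes c2: "count_list mu 2 = 0" and c3: "count_list mu 3 = 0"
begin

definition K2 :: "nat \<Rightarrow> nat \<Rightarrow> int" where "K2 i j = 2 * int (G 0 i j) - int (G 4 i j)"

lemma Zk2:
  assumes ij: "i < n" "j < n"
  shows "3 * (zv i * cnj (zv j)) = of_int (K2 i j)"
proof -
  have z: "zv i * cnj (zv j) = of_real (\<Sum>l<8. Smat 0 4 * Smat l 4 * real (G l i j))"
    unfolding zv_def by (rule F3s[OF c4]) (use ij in auto)
  have a: "(\<Sum>l<8. Smat 0 2 * Smat l 2 * real (G l i j)) = 0" by (rule F3z[OF c2]) (use ij in auto)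
  have b: "(\<Sum>l<8. Smat 0 3 * Smat l 3 * real (G l i j)) = 0" by (rule F3z[OF c3]) (use ij in auto)
  have g1: "real (G 1 i j) = real (G 0 i j)" using G17[OF ij] by simp
  have "(\<Sum>l<8. Smat 0 4 * Smat l 4 * real (G l i j)) = real_of_int (K2 i j) / 3"
    using a b g1 unfolding S2 S3 S4 K2_def by simp
  then have r: "zv i * cnj (zv j) = of_real (real_of_int (K2 i j) / 3)" unfolding z by (simp only:)
  have "3 * (zv i * cnj (zv j)) = 3 * of_real (real_of_int (K2 i j) / 3)" by (simp only: r)
  also have "\<dots> = of_int (K2 i j)" by simp
  finally show ?thesis .
qed

theorem z21_false: False
proof -
  have fin: "finite {..<n}" by simp
  have dg: "\<forall>i\<in>{..<n}. 0 \<le> K2 i i \<and> K2 i i \<le> 2"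
  proof
    fix i assume "i \<in> {..<n}"
    then have i: "i < n" by simp
    have "(of_int (K2 i i) :: complex) = 3 * (zv i * cnj (zv i))" using Zk2[OF i i] by simp
    also have "\<dots> = of_real (3 * ((Re (zv i))^2 + (Im (zv i))^2))" by (simp add: complex_mult_cnj)
    finally have "real_of_int (K2 i i) = 3 * ((Re (zv i))^2 + (Im (zv i))^2)"
      by (metis Re_complex_of_real of_real_of_int_eq)
    then have "0 \<le> K2 i i" by (smt (verit) of_int_0_le_iff zero_le_power2)
    moreover have "K2 i i \<le> 2" using G0[OF i i] by (simp add: K2_def)
    ultimately show "0 \<le> K2 i i \<and> K2 i i \<le> 2" by simp
  qed
  have off: "\<forall>i\<in>{..<n}. \<forall>j\<in>{..<n}. i \<noteq> j \<longrightarrow> K2 i j \<le> 0"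
    using G0 by (simp add: K2_def)
  have gram: "\<forall>i\<in>{..<n}. \<forall>j\<in>{..<n}. (K2 i j)^2 = K2 i i * K2 j j"
    using Zk2 by (auto intro: gram_int)
  have tr: "(\<Sum>i\<in>{..<n}. K2 i i) = 3" by (rule trace3) (use Zk2 in auto)
  have psd: "\<forall>T\<subseteq>{..<n}. 0 \<le> (\<Sum>i\<in>T. \<Sum>j\<in>T. K2 i j)"
  proof (intro allI impI)
    fix T assume T: "T \<subseteq> {..<n}"
    define s where "s = (\<Sum>i\<in>T. zv i)"
    have "(of_int (\<Sum>i\<in>T. \<Sum>j\<in>T. K2 i j) :: complex) = (\<Sum>i\<in>T. \<Sum>j\<in>T. of_int (K2 i j))"
      by simp
    also have "\<dots> = (\<Sum>i\<in>T. \<Sum>j\<in>T. 3 * (zv i * cnj (zv j)))"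
    proof (intro sum.cong refl)
      fix i j assume "i \<in> T" "j \<in> T"
      then have ij: "i < n" "j < n" using T by auto
      show "(of_int (K2 i j) :: complex) = 3 * (zv i * cnj (zv j))" using Zk2[OF ij] by simp
    qed
    also have "\<dots> = 3 * (\<Sum>i\<in>T. \<Sum>j\<in>T. zv i * cnj (zv j))" by (simp add: sum_distrib_left)
    also have "\<dots> = 3 * (s * cnj s)" by (simp add: s_def cnj_sum sum_product)
    also have "\<dots> = of_real (3 * ((Re s)^2 + (Im s)^2))" by (simp add: complex_mult_cnj)
    finally have "real_of_int (\<Sum>i\<in>T. \<Sum>j\<in>T. K2 i j) = 3 * ((Re s)^2 + (Im s)^2)"
      by (metis Re_complex_of_real of_real_of_int_eq)
    then show "0 \<le> (\<Sum>i\<in>T. \<Sum>j\<in>T. K2 i j)" by (smt (verit) of_int_0_le_iff zero_le_power2)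
  qed
  show False by (rule frust[OF fin dg off gram tr psd])
qed

end

lemma crit:
  fixes Z :: "nat \<Rightarrow> nat \<Rightarrow> nat"
  assumes d: "Z 0 0 = 1" "Z 1 1 = 1" "Z 4 4 = 1" "Z 6 6 = 0" "Z 7 7 = 0"
    and alt: "(\<Sum>v<8. Z v v) = 6 \<or> (\<Sum>v<8. Z v v) = 8 \<or> (Z 2 2 = 0 \<and> Z 3 3 = 0)"
  shows "nimless Z"
  unfolding nimless_def
proof
  assume "\<exists>n G. is_nimrep n G \<and> matches Z n G"
  then obtain n G where nim: "is_nimrep n G" and m: "matches Z n G" by blast
  from m obtain mu U where nZ: "n = (\<Sum>v<8. Z v v)" and len: "length mu = n"
    and cnt: "\<forall>v<8. count_list mu v = Z v v" and st: "set mu \<subseteq> {..<8}"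
    and orth: "\<forall>i<n. \<forall>j<n. (\<Sum>k<n. cnj (U k i) * U k j) = (if i = j then 1 else 0)"
    and eig: "\<forall>l<8. \<forall>i<n. \<forall>j<n. (\<Sum>k<n. of_nat (G l i k) * U k j)
             = U i j * complex_of_real (Smat l (mu ! j) / Smat 0 (mu ! j))"
    unfolding matches_def by blast
  have cs: "count_list mu 0 = 1" "count_list mu 1 = 1" "count_list mu 4 = 1"
    "count_list mu 6 = 0" "count_list mu 7 = 0"
    using cnt d by auto
  interpret nimZ n G mu U
    by (unfold_locales) (fact nim len st orth eig cs)+
  consider "n = 6" | "n = 8" | "Z 2 2 = 0 \<and> Z 3 3 = 0" using alt nZ by auto
  then show False
  proof cases
    case 1 then show ?thesis using n6_false by simp
  next
    case 2 then show ?thesis using n8_false by simp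
  next
    case 3
    then have c23: "count_list mu 2 = 0" "count_list mu 3 = 0" using cnt by auto
    interpret nimZ21 n G mu U by (unfold_locales) (fact c23)+
    show False by (rule z21_false)
  qed
qed

theorem proposition6p2:
  shows "nimless Z21 \<and> nimless Z61 \<and> nimless Z3 \<and> nimless Z4 \<and>
         nimless Z1 \<and> nimless Z12 \<and> nimless Z2 \<and> nimless Z16"
proof -
  have "nimless Z21" by (rule crit) (simp_all add: Z21_def la_def lb_def ind_def Eu_def sum8)
  moreover have "nimless Z61" by (rule crit) (simp_all add: Z61_def la_def lb_def ind_def Eu_def sum8)
  moreover have "nimless Z3" by (rule crit) (simp_all add: Z3_def la_def lb_def ind_def Eu_def sum8)
  moreover have "nimless Z4" by (rule crit) (simp_all add: Z4_def la_def lb_def ind_def Eu_def sum8)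
  moreover have "nimless Z1" by (rule crit) (simp_all add: Z1_def la_def lb_def ind_def Eu_def sum8)
  moreover have "nimless Z12" by (rule crit) (simp_all add: Z12_def Z21_def la_def lb_def ind_def Eu_def sum8)
  moreover have "nimless Z2" by (rule crit) (simp_all add: Z2_def la_def lb_def ind_def Eu_def sum8)
  moreover have "nimless Z16" by (rule crit) (simp_all add: Z16_def Z61_def la_def lb_def ind_def Eu_def sum8)
  ultimately show ?thesis by blast
qed

end
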